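(* Let $L=(l_1,\dots,l_n)$, $n\ge 4$, be a generic length vector satisfying the strict triangle inequality, and let $l_a\ge l_b\ge l_c$ be its three largest entries (for distinct indices $a,b,c$). Suppose $l_b+l_c>|L|/2$. Then for every vertex $(I,J,K)$ of $\Gamma(L)$, the vertices $(I,J,K)$ and $(J,I,K)$ lie in different connected components of $\Gamma(L)$; i.e. no path in $\Gamma(L)$ connects them.
   Context: Let $n\ge 4$ and $L=(l_1,\dots,l_n)$ be positive reals with $l_i<\sum_{j\ne i}l_j$ for every $i$ (strict triangle inequality), and generic: there is no $J\subseteq[n]$ with $\sum_{i\in J}l_i=\sum_{i\notin J}l_i$. Here $[n]=\{1,\dots,n\}$ and $|L|=\sum_{i=1}^n l_i$. A set $I\subseteq[n]$ is short if $\sum_{i\in I}l_i<|L|/2$ and long otherwise. A cyclically ordered partition of $[n]$ into $k$ parts is a sequence $(A_1,\dots,A_k)$ of pairwise disjoint nonempty sets with union $[n]$, considered up to cyclic shifts $(A_1,\dots,A_k)\sim(A_2,\dots,A_k,A_1)$; there is no ordering inside a part. It is admissible if every part is short. The graph $\Gamma(L)$ has as vertices the admissible cyclically ordered partitions of $[n]$ into 3 parts, written $(I,J,K)$, and as edges the admissible cyclically ordered partitions into 4 parts $(A,B,C,D)$; such an edge is incident to each of the partitions $(A\cup B,C,D)$, $(A,B\cup C,D)$, $(A,B,C\cup D)$, $(D\cup A,B,C)$ that is admissible. Equivalently, two vertices are adjacent iff one is obtained from the other by moving a nonempty proper subset of one part into another part. The mirror image of a vertex $(I,J,K)$ is the vertex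 $(J,I,K)$ (same parts, reversed cyclic order). (The condition $l_b+l_c>|L|/2$ is equivalent to disconnectedness of the moduli space of planar configurations of $L$.) *)

theory Defs
  imports Complex_Main
begin

definition total :: "(nat \<Rightarrow> real) \<Rightarrow> nat \<Rightarrow> real" where
  "total L n = (\<Sum>i\<in>{1..n}. L i)"

definition short :: "(nat \<Rightarrow> real) \<Rightarrow> nat \<Rightarrow> nat set \<Rightarrow> bool" where
  "short L n I \<longleftrightarrow> (\<Sum>i\<in>I. L i) < total L n / 2"

text \<open>Admissible ordered partition into 3 parts (a representative of a cyclically ordered one).\<close>
definition adm3 :: "(nat \<Rightarrow> real) \<Rightarrow> nat \<Rightarrow> nat set \<times> nat set \<times> nat set \<Rightarrow> bool" where
  "adm3 L n t = (case t of (I, J, K) \<Rightarrow>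
      I \<noteq> {} \<and> J \<noteq> {} \<and> K \<noteq> {} \<and>
      I \<inter> J = {} \<and> J \<inter> K = {} \<and> I \<inter> K = {} \<and>
      I \<union> J \<union> K = {1..n} \<and>
      short L n I \<and> short L n J \<and> short L n K)"

definition adm4 :: "(nat \<Rightarrow> real) \<Rightarrow> nat \<Rightarrow> nat set \<Rightarrow> nat set \<Rightarrow> nat set \<Rightarrow> nat set \<Rightarrow> bool" where
  "adm4 L n A B C D \<longleftrightarrow>
      A \<noteq> {} \<and> B \<noteq> {} \<and> C \<noteq> {} \<and> D \<noteq> {} \<and>
      A \<inter> B = {} \<and> A \<inter> C = {} \<and> A \<inter> D = {} \<and>
      B \<inter> C = {} \<and> B \<inter> D = {} \<and> C \<inter> D = {} \<and>
      A \<union> B \<union> C \<union> D = {1..n} \<and>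
      short L n A \<and> short L n B \<and> short L n C \<and> short L n D"

definition cyc_eq :: "'a \<times> 'a \<times> 'a \<Rightarrow> 'a \<times> 'a \<times> 'a \<Rightarrow> bool" where
  "cyc_eq s t = (case t of (I, J, K) \<Rightarrow> s = (I, J, K) \<or> s = (J, K, I) \<or> s = (K, I, J))"

definition merges :: "nat set \<Rightarrow> nat set \<Rightarrow> nat set \<Rightarrow> nat set \<Rightarrow> (nat set \<times> nat set \<times> nat set) set" where
  "merges A B C D = {(A \<union> B, C, D), (A, B \<union> C, D), (A, B, C \<union> D), (D \<union> A, B, C)}"

text \<open>Adjacency in Gamma(L), on representatives: both vertices are admissible merges
  of one admissible cyclically ordered 4-partition (an edge), up to cyclic shift.\<close>
definition gamma_adj :: "(nat \<Rightarrow> real) \<Rightarrow> nat \<Rightarrow> nat set \<times> nat set \<times> nat set \<Rightarrow> nat set \<times> nat set \<times> nat set \<Rightarrow> bool" where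
  "gamma_adj L n v w \<longleftrightarrow> adm3 L n v \<and> adm3 L n w \<and>
     (\<exists>A B C D m1 m2. adm4 L n A B C D \<and> m1 \<in> merges A B C D \<and> m2 \<in> merges A B C D \<and>
        adm3 L n m1 \<and> adm3 L n m2 \<and> cyc_eq v m1 \<and> cyc_eq w m2)"

text \<open>Two representatives lie in the same connected component of Gamma(L):
  joined by a finite chain of cyclic re-representations and edges.\<close>
definition gamma_connected :: "(nat \<Rightarrow> real) \<Rightarrow> nat \<Rightarrow> nat set \<times> nat set \<times> nat set \<Rightarrow> nat set \<times> nat set \<times> nat set \<Rightarrow> bool" where
  "gamma_connected L n v w \<longleftrightarrow>
     (\<lambda>x y. (adm3 L n x \<and> cyc_eq x y) \<or> gamma_adj L n x y)\<^sup>*\<^sup>* v w"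

end

theory Submission
  imports Defs
begin

definition orient :: "nat \<Rightarrow> nat \<Rightarrow> nat \<Rightarrow> nat set \<times> nat set \<times> nat set \<Rightarrow> bool" where
  "orient a b c t = (case t of (I, J, K) \<Rightarrow>
     (a\<in>I \<and> b\<in>J \<and> c\<in>K) \<or> (a\<in>J \<and> b\<in>K \<and> c\<in>I) \<or> (a\<in>K \<and> b\<in>I \<and> c\<in>J))"
definition sep1 :: "nat \<Rightarrow> nat \<Rightarrow> nat \<Rightarrow> nat set \<Rightarrow> bool" where
  "sep1 a b c X = (\<not>(a\<in>X\<and>b\<in>X) \<and> \<not>(a\<in>X\<and>c\<in>X) \<and> \<not>(b\<in>X\<and>c\<in>X))"
definition sep3 :: "nat \<Rightarrow> nat \<Rightarrow> nat \<Rightarrow> nat set \<times> nat set \<times> nat set \<Rightarrow> bool" where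
  "sep3 a b c t = (case t of (I, J, K) \<Rightarrow> sep1 a b c I \<and> sep1 a b c J \<and> sep1 a b c K)"

lemma merges_orient_aux:
  assumes ma: "a \<in> A \<or> a \<in> B \<or> a \<in> C \<or> a \<in> D"
   and mb: "b \<in> A \<or> b \<in> B \<or> b \<in> C \<or> b \<in> D"
   and mc: "c \<in> A \<or> c \<in> B \<or> c \<in> C \<or> c \<in> D"
   and d: "A \<inter> B = {}" "A \<inter> C = {}" "A \<inter> D = {}" "B \<inter> C = {}" "B \<inter> D = {}" "C \<inter> D = {}"
   and m: "m1 \<in> {(A \<union> B, C, D), (A, B \<union> C, D), (A, B, C \<union> D), (D \<union> A, B, C)}"
          "m2 \<in> {(A \<union> B, C, D), (A, B \<union> C, D), (A, B, C \<union> D), (D \<union> A, B, C)}"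
   and s: "sep3 a b c m1" "sep3 a b c m2"
  shows "orient a b c m1 = orient a b c m2"
proof -
  have loc: "\<And>x. x \<in> A \<or> x \<in> B \<or> x \<in> C \<or> x \<in> D \<Longrightarrow>
     (x\<in>A\<and>x\<notin>B\<and>x\<notin>C\<and>x\<notin>D) \<or> (x\<notin>A\<and>x\<in>B\<and>x\<notin>C\<and>x\<notin>D) \<or>
     (x\<notin>A\<and>x\<notin>B\<and>x\<in>C\<and>x\<notin>D) \<or> (x\<notin>A\<and>x\<notin>B\<and>x\<notin>C\<and>x\<in>D)"
    using d by blast
  show ?thesis
    using loc[OF ma] loc[OF mb] loc[OF mc] m s unfolding orient_def sep3_def sep1_def
    apply (elim disjE conjE insertE emptyE)
    apply (simp_all)
    done
qed

lemma cyc_orient: "cyc_eq s t \<Longrightarrow> orient a b c s = orient a b c t"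
  unfolding cyc_eq_def orient_def by (cases t) auto

lemma not_short_pair:
  assumes pos: "\<forall>i\<in>{1..n}. L i > 0" and S: "S \<subseteq> {1..n}" and xy: "x \<in> S" "y \<in> S" "x \<noteq> y"
    and big: "L x + L y > total L n / 2"
  shows "\<not> short L n S"
proof -
  have "finite S" using S finite_subset by blast
  have "(\<Sum>i\<in>{x,y}. L i) \<le> (\<Sum>i\<in>S. L i)"
    by (rule sum_mono2) (use \<open>finite S\<close> xy S pos in \<open>auto simp: less_imp_le\<close>)
  then show ?thesis using xy big unfolding short_def by auto
qed

lemma adm3_sep:
  assumes "adm3 L n t"
    and nab: "\<And>S. S \<subseteq> {1..n} \<Longrightarrow> a \<in> S \<Longrightarrow> b \<in> S \<Longrightarrow> \<not> short L n S"
    and nac: "\<And>S. S \<subseteq> {1..n} \<Longrightarrow> a \<in> S \<Longrightarrow> c \<in> S \<Longrightarrow> \<not> short L n S"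
    and nbc: "\<And>S. S \<subseteq> {1..n} \<Longrightarrow> b \<in> S \<Longrightarrow> c \<in> S \<Longrightarrow> \<not> short L n S"
  shows "sep3 a b c t"
proof (cases t)
  case (fields I J K)
  have U: "I \<union> J \<union> K = {1..n}" and sI: "short L n I" and sJ: "short L n J" and sK: "short L n K"
    using assms(1) unfolding adm3_def fields by auto
  have sub: "I \<subseteq> {1..n}" "J \<subseteq> {1..n}" "K \<subseteq> {1..n}" using U by auto
  have "sep1 a b c X" if "X \<in> {I,J,K}" for X
  proof -
    have "X \<subseteq> {1..n}" "short L n X" using that sub sI sJ sK by auto
    then show ?thesis unfolding sep1_def using nab[of X] nac[of X] nbc[of X] by blast
  qed
  then show ?thesis unfolding sep3_def fields by simp
qed

theorem mainTheorem7:
  fixes L :: "nat \<Rightarrow> real" and n a b c :: nat and I J K :: "nat set"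
  assumes "n \<ge> 4"
    and "\<forall>i\<in>{1..n}. L i > 0"
    and "\<forall>i\<in>{1..n}. L i < (\<Sum>j\<in>{1..n} - {i}. L j)"
    and "\<forall>S\<subseteq>{1..n}. (\<Sum>i\<in>S. L i) \<noteq> (\<Sum>i\<in>{1..n} - S. L i)"
    and "a \<in> {1..n}" "b \<in> {1..n}" "c \<in> {1..n}" "a \<noteq> b" "b \<noteq> c" "a \<noteq> c"
    and "L a \<ge> L b" "L b \<ge> L c"
    and "\<forall>i\<in>{1..n} - {a, b, c}. L i \<le> L c"
    and "L b + L c > total L n / 2"
    and "adm3 L n (I, J, K)"
  shows "\<not> gamma_connected L n (I, J, K) (J, I, K)"
proof
  have bab: "L a + L b > total L n / 2" and bac: "L a + L c > total L n / 2"
    using assms(11,12,14) by linarith+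
  have ns: "\<not> short L n S" if "S \<subseteq> {1..n}" "x \<in> S" "y \<in> S" "x \<noteq> y" "x \<in> {a,b,c}" "y \<in> {a,b,c}"
    for S x y
  proof -
    have "L x + L y > total L n / 2" using that bab bac assms(14) by (auto simp: add.commute)
    then show ?thesis using not_short_pair[OF assms(2) that(1-4)] by blast
  qed
  have nab: "\<not> short L n S" if "S \<subseteq> {1..n}" "a \<in> S" "b \<in> S" for S
    using ns[of S a b] that assms(8) by blast
  have nac: "\<not> short L n S" if "S \<subseteq> {1..n}" "a \<in> S" "c \<in> S" for S
    using ns[of S a c] that assms(10) by blast
  have nbc: "\<not> short L n S" if "S \<subseteq> {1..n}" "b \<in> S" "c \<in> S" for S
    using ns[of S b c] that assms(9) by blast
  have stp: "orient a b c y = orient a b c x"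
    if "(adm3 L n x \<and> cyc_eq x y) \<or> gamma_adj L n x y" for x y
  proof (cases "adm3 L n x \<and> cyc_eq x y")
    case True then show ?thesis using cyc_orient by metis
  next
    case False
    then have "gamma_adj L n x y" using that by blast
    then obtain A B C D m1 m2 where h: "adm4 L n A B C D" "m1 \<in> merges A B C D"
      "m2 \<in> merges A B C D" "cyc_eq x m1" "cyc_eq y m2" "adm3 L n m1" "adm3 L n m2"
      unfolding gamma_adj_def by blast
    have U: "A \<union> B \<union> C \<union> D = {1..n}" and d: "A \<inter> B = {}" "A \<inter> C = {}" "A \<inter> D = {}"
      "B \<inter> C = {}" "B \<inter> D = {}" "C \<inter> D = {}"
      using h(1) unfolding adm4_def by auto
    have a1: "m1 \<in> {(A \<union> B, C, D), (A, B \<union> C, D), (A, B, C \<union> D), (D \<union> A, B, C)}"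
      "m2 \<in> {(A \<union> B, C, D), (A, B \<union> C, D), (A, B, C \<union> D), (D \<union> A, B, C)}"
      using h(2,3) unfolding merges_def by auto
    have s1: "sep3 a b c m1" "sep3 a b c m2"
      using adm3_sep[OF h(6) nab nac nbc] adm3_sep[OF h(7) nab nac nbc] by blast+
    have m: "orient a b c m1 = orient a b c m2"
      by (rule merges_orient_aux[OF _ _ _ d a1 s1]) (use U assms(5,6,7) in blast)+
    show ?thesis using m cyc_orient[OF h(4)] cyc_orient[OF h(5)] by simp
  qed
  assume "gamma_connected L n (I, J, K) (J, I, K)"
  then have "orient a b c (J, I, K) = orient a b c (I, J, K)"
    unfolding gamma_connected_def
  proof (induction rule: rtranclp_induct)
    case base then show ?case by simp
  next
    case (step y z) then show ?case using stp[OF step(2)] step(3) by simp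
  qed
  moreover have "orient a b c (J, I, K) \<noteq> orient a b c (I, J, K)"
  proof -
    have U: "I \<union> J \<union> K = {1..n}" and d: "I \<inter> J = {}" "J \<inter> K = {}" "I \<inter> K = {}"
      using assms(15) unfolding adm3_def by auto
    have "sep3 a b c (I, J, K)" using adm3_sep[OF assms(15) nab nac nbc] .
    then have x: "sep1 a b c I" "sep1 a b c J" "sep1 a b c K" unfolding sep3_def by auto
    have ma: "a \<in> I \<or> a \<in> J \<or> a \<in> K" using U assms(5) by blast
    have mb: "b \<in> I \<or> b \<in> J \<or> b \<in> K" using U assms(6) by blast
    have mc: "c \<in> I \<or> c \<in> J \<or> c \<in> K" using U assms(7) by blast
    have loc: "\<And>x. x \<in> I \<or> x \<in> J \<or> x \<in> K \<Longrightarrow>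
      (x\<in>I\<and>x\<notin>J\<and>x\<notin>K) \<or> (x\<notin>I\<and>x\<in>J\<and>x\<notin>K) \<or> (x\<notin>I\<and>x\<notin>J\<and>x\<in>K)"
      using d by blast
    show ?thesis using loc[OF ma] loc[OF mb] loc[OF mc] x unfolding orient_def sep1_def
      apply (elim disjE conjE)
      apply simp_all
      done
  qed
  ultimately show False by simp
qed

end
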